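(* In the setting of the context, for every $N>0$, $$\iint_{\overline{R}_N}\left|\frac{\partial v_N}{\partial x}\right|^2\,dx\,dy\le\frac{16}{N}.$$
   Context: Fix a small universal constant $\alpha\in(0,1)$ (e.g. $\alpha=1/10$). For $N>0$ let $\overline{R}_N=[-3N,3N]\times[-1,1]\subset\mathbb{R}^2$ with coordinates $(x,y)$, and define $f_N(x)=1-\alpha$ if $|x|\le N$, $f_N(x)=\frac{|x|(1+\alpha)}{N}-2\alpha$ if $N\le|x|\le 2N$, $f_N(x)=2$ if $2N\le|x|\le3N$. For $x\in[-3N,3N]$ and $w\in W^{1,2}([-1,1])$ let $H_x(w)=\int_{-1}^1(w'(y))^2dy+|\{w\neq0\}\cap[-1,1]|$. The slice minimizer $v_N$ is defined by letting, for each $x\in[-3N,3N]$, $v_N(x,\cdot)$ be the unique minimizer of $H_x$ among $w\in W^{1,2}([-1,1])$ with $w(\pm1)=\pm f_N(x)$. *)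

theory Defs
  imports "HOL-Analysis.Analysis"
begin

definition fN :: "real \<Rightarrow> real \<Rightarrow> real \<Rightarrow> real" where
  "fN \<alpha> N x =
     (if \<bar>x\<bar> \<le> N then 1 - \<alpha>
      else if \<bar>x\<bar> \<le> 2 * N then \<bar>x\<bar> * (1 + \<alpha>) / N - 2 * \<alpha>
      else 2)"

text \<open>W^{1,2}([-1,1]) in one dimension: w (continuous representative, normalised to
  vanish outside [-1,1]) is the integral of a square-integrable weak derivative g.\<close>
definition W12 :: "(real \<Rightarrow> real) \<Rightarrow> (real \<Rightarrow> real) \<Rightarrow> bool" where
  "W12 w g \<longleftrightarrow>
     set_integrable lborel {-1..1} g \<and>
     set_integrable lborel {-1..1} (\<lambda>y. (g y)\<^sup>2) \<and>
     (\<forall>y\<in>{-1..1}. w y = w (-1) + set_lebesgue_integral lborel {-1..y} g) \<and>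
     (\<forall>y. y \<notin> {-1..1} \<longrightarrow> w y = 0)"

definition Hx :: "(real \<Rightarrow> real) \<Rightarrow> (real \<Rightarrow> real) \<Rightarrow> real" where
  "Hx w g = set_lebesgue_integral lborel {-1..1} (\<lambda>y. (g y)\<^sup>2)
            + measure lborel {y\<in>{-1..1}. w y \<noteq> 0}"

definition admissible :: "real \<Rightarrow> (real \<Rightarrow> real) \<Rightarrow> (real \<Rightarrow> real) \<Rightarrow> bool" where
  "admissible a w g \<longleftrightarrow> W12 w g \<and> w (-1) = - a \<and> w 1 = a"

definition slice_min :: "real \<Rightarrow> (real \<Rightarrow> real) \<Rightarrow> bool" where
  "slice_min a w \<longleftrightarrow>
     (\<exists>g. admissible a w g \<and> (\<forall>w' g'. admissible a w' g' \<longrightarrow> Hx w g \<le> Hx w' g'))"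

definition vN :: "real \<Rightarrow> real \<Rightarrow> real \<Rightarrow> real \<Rightarrow> real" where
  "vN \<alpha> N x y = (THE w. slice_min (fN \<alpha> N x) w) y"

text \<open>Pointwise partial derivative in x (set to 0 where it does not exist;
  v_N is Lipschitz in x, so this is the a.e./weak derivative).\<close>
definition dvN_dx :: "real \<Rightarrow> real \<Rightarrow> real \<Rightarrow> real \<Rightarrow> real" where
  "dvN_dx \<alpha> N x y =
     (if (\<lambda>t. vN \<alpha> N t y) differentiable (at x) then deriv (\<lambda>t. vN \<alpha> N t y) x else 0)"

end

theory Submission
  imports Defs
begin

lemma cs_int:
  fixes h :: "real \<Rightarrow> real"
  assumes hi: "h integrable_on {u..v}" and h2i: "(\<lambda>y. (h y)^2) integrable_on {u..v}" and uv: "u \<le> v"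
  shows "(integral {u..v} h)^2 \<le> (v-u) * integral {u..v} (\<lambda>y. (h y)^2)"
proof (cases "u = v")
  case True then show ?thesis by simp
next
  case False
  hence l: "v - u > 0" using uv by simp
  define I where "I = integral {u..v} h"
  define J where "J = integral {u..v} (\<lambda>y. (h y)^2)"
  define c where "c = I / (v-u)"
  have e: "(\<lambda>y. (h y - c)^2) = (\<lambda>y. (h y)^2 - (2*c) * h y + c^2)"
    by (auto simp: power2_eq_square algebra_simps)
  have i1: "(\<lambda>y. (2*c) * h y) integrable_on {u..v}" using integrable_cmul[OF hi, of "2*c"] by simp
  have "0 \<le> integral {u..v} (\<lambda>y. (h y - c)^2)"
    by (rule integral_nonneg) (use hi h2i i1 e in \<open>auto intro!: integrable_diff integrable_add\<close>)
  also have "\<dots> = J - 2*c*I + c^2 * (v-u)"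
    unfolding e J_def I_def using hi h2i i1 uv
    by (subst integral_add, (auto intro!: integrable_diff)[2], subst integral_diff) auto
  finally have "0 \<le> J - 2*c*I + c^2*(v-u)" .
  hence A: "0 \<le> (v-u) * (J - 2*c*I + c^2*(v-u))" using l by simp
  have cI: "c*(v-u) = I" using l unfolding c_def by simp
  have "(v-u) * (J - 2*c*I + c^2*(v-u)) = (v-u)*J - 2*(c*(v-u))*I + (c*(v-u))^2"
    by (simp add: algebra_simps power2_eq_square)
  also have "\<dots> = (v-u)*J - I^2" unfolding cI by (simp add: power2_eq_square)
  finally have "(v-u) * (J - 2*c*I + c^2*(v-u)) = (v-u)*J - I^2" .
  with A show ?thesis unfolding I_def J_def by simp
qed

lemma sq_integrable:
  fixes g :: "real \<Rightarrow> real"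
  assumes gi: "g integrable_on S" and g2i: "(\<lambda>y. (g y)^2) integrable_on S" and S: "S = {u..v}" and uv: "u \<le> v"
  shows "(\<lambda>y. (g y - c)^2) integrable_on S"
    and "integral S (\<lambda>y. (g y - c)^2) = integral S (\<lambda>y. (g y)^2) - 2*c*integral S g + c^2 * (v-u)"
proof -
  have e: "(\<lambda>y. (g y - c)^2) = (\<lambda>y. (g y)^2 - (2*c) * g y + c^2)"
    by (auto simp: power2_eq_square algebra_simps)
  have i1: "(\<lambda>y. (2*c) * g y) integrable_on S" using integrable_cmul[OF gi, of "2*c"] by simp
  have ic: "(\<lambda>y. c^2) integrable_on S" using S by (simp add: integrable_const_ivl)
  show "(\<lambda>y. (g y - c)^2) integrable_on S" unfolding e using g2i i1 ic
    by (intro integrable_add integrable_diff) auto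
  show "integral S (\<lambda>y. (g y - c)^2) = integral S (\<lambda>y. (g y)^2) - 2*c*integral S g + c^2 * (v-u)"
    unfolding e using g2i i1 ic gi
    by (subst integral_add, (auto intro!: integrable_diff)[2], subst integral_diff) (use uv in \<open>auto simp: S\<close>)
qed

lemma rigid:
  fixes g :: "real \<Rightarrow> real"
  assumes gi: "g integrable_on {u..v}" and g2i: "(\<lambda>y. (g y)^2) integrable_on {u..v}" and uv: "u \<le> v"
    and I: "integral {u..v} g = c*(v-u)" and J: "integral {u..v} (\<lambda>y. (g y)^2) \<le> c^2*(v-u)"
    and y: "y \<in> {u..v}"
  shows "integral {u..y} g = c*(y-u)"
proof -
  let ?h = "\<lambda>y. g y - c"
  have h2: "(\<lambda>y. (?h y)^2) integrable_on {u..v}"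
    "integral {u..v} (\<lambda>y. (?h y)^2) = integral {u..v} (\<lambda>y. (g y)^2) - 2*c*integral {u..v} g + c^2 * (v-u)"
    using sq_integrable[OF gi g2i refl uv] by auto
  have hv: "integral {u..v} (\<lambda>y. (?h y)^2) \<le> 0"
    using h2(2) I J uv by (simp add: power2_eq_square algebra_simps)
  have yy: "u \<le> y" "y \<le> v" using y by auto
  have "integral {u..y} (\<lambda>y. (?h y)^2) + integral {y..v} (\<lambda>y. (?h y)^2) = integral {u..v} (\<lambda>y. (?h y)^2)"
    by (rule Henstock_Kurzweil_Integration.integral_combine[OF yy h2(1)])
  moreover have "integral {y..v} (\<lambda>y. (?h y)^2) \<ge> 0"
    by (rule integral_nonneg) (use integrable_on_subinterval[OF h2(1)] yy in auto)
  ultimately have hy: "integral {u..y} (\<lambda>y. (?h y)^2) \<le> 0" using hv by linarith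
  have giy: "g integrable_on {u..y}" "(\<lambda>y. (g y)^2) integrable_on {u..y}"
    using integrable_on_subinterval[OF gi] integrable_on_subinterval[OF g2i] yy by auto
  have hiy: "?h integrable_on {u..y}" using giy by (intro integrable_diff) auto
  have h2y: "(\<lambda>y. (?h y)^2) integrable_on {u..y}" using sq_integrable[OF giy refl yy(1)] by auto
  have "(integral {u..y} ?h)^2 \<le> (y-u) * integral {u..y} (\<lambda>y. (?h y)^2)"
    by (rule cs_int[OF hiy h2y yy(1)])
  also have "\<dots> \<le> 0" using hy yy by (simp add: mult_nonneg_nonpos)
  finally have "integral {u..y} ?h = 0" by simp
  moreover have "integral {u..y} ?h = integral {u..y} g - c*(y-u)"
    using giy yy by (subst integral_diff) auto
  ultimately show ?thesis by simp
qed

lemma comb: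
  fixes g :: "real \<Rightarrow> real"
  assumes "g integrable_on {a..b}" "a \<le> s" "s \<le> t" "t \<le> b"
  shows "integral {a..t} g = integral {a..s} g + integral {s..t} g"
proof -
  have "g integrable_on {a..t}" using integrable_on_subinterval[OF assms(1)] assms by auto
  from Henstock_Kurzweil_Integration.integral_combine[OF assms(2,3) this] show ?thesis by simp
qed

lemma W12_HK:
  fixes w g :: "real \<Rightarrow> real"
  assumes "W12 w g"
  shows "g integrable_on {-1..1}" "(\<lambda>y. (g y)^2) integrable_on {-1..1}"
    "\<And>y. y\<in>{-1..1} \<Longrightarrow> w y = w (-1) + integral {-1..y} g"
    "set_lebesgue_integral lborel {-1..1} (\<lambda>y. (g y)^2) = integral {-1..1} (\<lambda>y. (g y)^2)"
    "continuous_on {-1..1} w"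
    "\<And>y. y \<notin> {-1..1} \<Longrightarrow> w y = 0"
proof -
  have si: "set_integrable lborel {-1..1} g" and s2: "set_integrable lborel {-1..1} (\<lambda>y. (g y)\<^sup>2)"
    and wy: "\<forall>y\<in>{-1..1}. w y = w (-1) + set_lebesgue_integral lborel {-1..y} g"
    and wo: "\<forall>y. y \<notin> {-1..1} \<longrightarrow> w y = 0"
    using assms unfolding W12_def by blast+
  show gi: "g integrable_on {-1..1}" using set_borel_integral_eq_integral(1)[OF si] .
  show "(\<lambda>y. (g y)^2) integrable_on {-1..1}" using set_borel_integral_eq_integral(1)[OF s2] .
  show "set_lebesgue_integral lborel {-1..1} (\<lambda>y. (g y)^2) = integral {-1..1} (\<lambda>y. (g y)^2)"
    using set_borel_integral_eq_integral(2)[OF s2] .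
  show wI: "w y = w (-1) + integral {-1..y} g" if "y\<in>{-1..1}" for y
  proof -
    have "set_integrable lborel {-1..y} g"
      by (rule set_integrable_subset[OF si]) (use that in auto)
    from set_borel_integral_eq_integral(2)[OF this] bspec[OF wy that] show ?thesis by argo
  qed
  show "y \<notin> {-1..1} \<Longrightarrow> w y = 0" for y using wo by auto
  have "continuous_on {-1..1} (\<lambda>y. w (-1) + integral {-1..y} g)"
    by (intro continuous_on_add continuous_on_const indefinite_integral_continuous_1 gi)
  then show "continuous_on {-1..1} w"
    by (rule continuous_on_eq) (metis wI)
qed

lemma amgm1:
  fixes a t J :: real
  assumes "0 < t" "a^2 \<le> t*J"
  shows "2*a \<le> J + t" "J + t \<le> 2*a \<Longrightarrow> t = a \<and> J = a"
proof -
  have e: "t*(J + t - 2*a) = (t*J - a^2) + (t-a)^2" by (simp add: algebra_simps power2_eq_square)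
  have "0 \<le> t*(J + t - 2*a)" unfolding e using assms by simp
  hence "0 \<le> J + t - 2*a" using assms(1) by (simp add: zero_le_mult_iff)
  thus "2*a \<le> J + t" by simp
  assume le: "J + t \<le> 2*a"
  hence "J + t - 2*a = 0" using \<open>0 \<le> J + t - 2*a\<close> by simp
  hence "(t*J - a^2) + (t-a)^2 = 0" using e by simp
  moreover have "0 \<le> t*J - a^2" using assms by simp
  ultimately have "(t-a)^2 = 0" by (smt (verit) zero_le_power2)
  hence "t = a" by simp
  thus "t = a \<and> J = a" using \<open>J + t - 2*a = 0\<close> by simp
qed

lemma amgm2:
  fixes a t J :: real
  assumes "0 < a" "0 < t" "a^2 \<le> t*J"
  shows "2*a^2 - (a^2)*t \<le> J" "J \<le> 2*a^2 - (a^2)*t \<Longrightarrow> t = 1"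
proof -
  have e: "t*(J - (2*a^2 - (a^2)*t)) = (t*J - a^2) + a^2*(1-t)^2" by (simp add: algebra_simps power2_eq_square)
  have "0 \<le> t*(J - (2*a^2 - (a^2)*t))" unfolding e using assms by simp
  hence "0 \<le> J - (2*a^2 - (a^2)*t)" using assms(2) by (simp add: zero_le_mult_iff)
  thus "2*a^2 - (a^2)*t \<le> J" by simp
  assume le: "J \<le> 2*a^2 - (a^2)*t"
  hence "J - (2*a^2 - (a^2)*t) = 0" using \<open>0 \<le> J - (2*a^2 - (a^2)*t)\<close> by simp
  hence "(t*J - a^2) + a^2*(1-t)^2 = 0" using e by simp
  moreover have "0 \<le> t*J - a^2" using assms by simp
  moreover have "0 \<le> a^2*(1-t)^2" by simp
  ultimately have "a^2*(1-t)^2 = 0" by linarith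
  thus "t = 1" using assms(1) by simp
qed

definition Eab :: "real \<Rightarrow> real" where
  "Eab a = (if a < 1 then 4*a else 2*a^2 + 2)"

definition Ws :: "real \<Rightarrow> real \<Rightarrow> real" where
  "Ws a y = (if y \<in> {-1..1} then (if 1 \<le> a then a*y else max 0 (y-(1-a)) + min 0 (y+(1-a))) else 0)"

lemma lower:
  fixes w g :: "real \<Rightarrow> real" and a :: real
  assumes a: "0 < a" and adm: "admissible a w g"
  shows "Eab a \<le> Hx w g" and "Hx w g \<le> Eab a \<Longrightarrow> w = Ws a"
proof -
  have W: "W12 w g" and wm: "w (-1) = -a" and wp: "w 1 = a" using adm unfolding admissible_def by auto
  note H = W12_HK[OF W]
  have gi: "g integrable_on {-1..1}" and g2i: "(\<lambda>y. (g y)^2) integrable_on {-1..1}" using H by auto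
  have wI: "w y = -a + integral {-1..y} g" if "y \<in> {-1..1}" for y
    using H(3)[OF that] wm by linarith
  have wc: "continuous_on {-1..1} w" using H(5) .
  have wo: "w y = 0" if "y \<notin> {-1..1}" for y using H(6)[OF that] .
  have HX: "Hx w g = integral {-1..1} (\<lambda>y. (g y)^2) + measure lborel {y\<in>{-1..1}. w y \<noteq> 0}"
    unfolding Hx_def H(4) by simp
  define K where "K = {y\<in>{-1..1}. w y = 0}"
  have Kc: "closed K" using continuous_closed_preimage_constant[OF wc] by (simp add: K_def)
  obtain z where z: "-1 \<le> z" "z \<le> 1" "w z = 0" using IVT'[of w "-1" 0 1] wm wp a wc by auto
  have Kne: "K \<noteq> {}" using z K_def by auto
  have Kb: "bdd_below K" "bdd_above K" unfolding K_def
    by (auto intro: bdd_belowI[of _ "-1"] bdd_aboveI[of _ 1])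
  define p where "p = Inf K"
  define q where "q = Sup K"
  have pK: "p \<in> K" unfolding p_def using closed_contains_Inf[OF Kne Kb(1) Kc] .
  have qK: "q \<in> K" unfolding q_def using closed_contains_Sup[OF Kne Kb(2) Kc] .
  have Kpq: "K \<subseteq> {p..q}" unfolding p_def q_def using cInf_lower[OF _ Kb(1)] cSup_upper[OF _ Kb(2)] by auto
  have pq: "p \<le> q" using pK Kpq by auto
  have p1: "-1 \<le> p" "p \<le> 1" "w p = 0" using pK K_def by auto
  have q1: "-1 \<le> q" "q \<le> 1" "w q = 0" using qK K_def by auto
  have pm: "-1 < p" using p1 wm a by (cases "p = -1") auto
  have qm: "q < 1" using q1 wp a by (cases "q = 1") auto
  have Ip: "integral {-1..p} g = a" using wI[of p] p1 by simp
  have Iq: "integral {-1..q} g = a" using wI[of q] q1 by simp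
  have I1: "integral {-1..1} g = 2*a" using wI[of 1] wp by simp
  have Ipq: "integral {p..q} g = 0" using comb[OF gi, of p q] Ip Iq pq p1 q1 by simp
  have Iq1: "integral {q..1} g = a" using comb[OF gi, of q 1] Iq I1 q1 by simp
  define J1 where "J1 = integral {-1..p} (\<lambda>y. (g y)^2)"
  define J2 where "J2 = integral {p..q} (\<lambda>y. (g y)^2)"
  define J3 where "J3 = integral {q..1} (\<lambda>y. (g y)^2)"
  have Jsum: "integral {-1..1} (\<lambda>y. (g y)^2) = J1 + J2 + J3"
    using comb[OF g2i, of p q] comb[OF g2i, of q 1] pq p1 q1 unfolding J1_def J2_def J3_def by simp
  have gi1: "g integrable_on {-1..p}" "(\<lambda>y. (g y)^2) integrable_on {-1..p}"
    using integrable_on_subinterval[OF gi] integrable_on_subinterval[OF g2i] p1 by auto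
  have gi2: "g integrable_on {p..q}" "(\<lambda>y. (g y)^2) integrable_on {p..q}"
    using integrable_on_subinterval[OF gi] integrable_on_subinterval[OF g2i] p1 q1 by auto
  have gi3: "g integrable_on {q..1}" "(\<lambda>y. (g y)^2) integrable_on {q..1}"
    using integrable_on_subinterval[OF gi] integrable_on_subinterval[OF g2i] q1 by auto
  have cs1: "a^2 \<le> (p+1) * J1" using cs_int[OF gi1 p1(1)] Ip unfolding J1_def by simp
  have cs3: "a^2 \<le> (1-q) * J3" using cs_int[OF gi3 q1(2)] Iq1 unfolding J3_def by simp
  have J2n: "0 \<le> J2" unfolding J2_def by (rule integral_nonneg[OF gi2(2)]) simp
  have Ksets: "K \<in> sets lborel" using borel_closed[OF Kc] by simp
  have ZK: "{y\<in>{-1..1}. w y \<noteq> 0} = {-1..1} - K" by (auto simp: K_def)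
  have "measure lborel ({-1..1} - K) = measure lborel {-1..1::real} - measure lborel K"
    by (rule measure_Diff) (simp, simp, rule Ksets, auto simp: K_def)
  moreover have "measure lborel K \<le> measure lborel {p..q}"
    by (rule measure_mono_fmeasurable[OF Kpq Ksets]) (simp add: fmeasurable_def emeasure_lborel_Icc_eq)
  ultimately have mZ: "measure lborel {y\<in>{-1..1}. w y \<noteq> 0} \<ge> (p+1) + (1-q)"
    unfolding ZK using pq by simp
  have HX2: "Hx w g = J1 + J2 + J3 + measure lborel {y\<in>{-1..1}. w y \<noteq> 0}"
    unfolding HX Jsum ..
  have s1: "0 < p+1" using pm by simp
  have s2: "0 < 1-q" using qm by simp
  have extW: "w = Ws a" if on: "\<And>y. y \<in> {-1..1} \<Longrightarrow> w y = Ws a y"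
  proof
    fix y show "w y = Ws a y" using on[of y] wo[of y] by (cases "y \<in> {-1..1}") (auto simp: Ws_def)
  qed
  have main: "Eab a \<le> Hx w g \<and> (Hx w g \<le> Eab a \<longrightarrow> w = Ws a)"
  proof (cases "a < 1")
    case True
    have E: "Eab a = 4*a" using True by (simp add: Eab_def)
    note A1 = amgm1[OF s1 cs1] and A3 = amgm1[OF s2 cs3]
    have G1: "Eab a \<le> Hx w g" unfolding E HX2 using A1(1) A3(1) J2n mZ by linarith
    moreover have "Hx w g \<le> Eab a \<longrightarrow> w = Ws a"
    proof
    assume "Hx w g \<le> Eab a"
    hence le: "J1 + J2 + J3 + measure lborel {y\<in>{-1..1}. w y \<noteq> 0} \<le> 4*a" unfolding E HX2 .
    have e1: "p+1 = a \<and> J1 = a" using A1 A3(1) J2n mZ le by linarith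
    have e3: "1-q = a \<and> J3 = a" using A3 A1(1) J2n mZ le by linarith
    have e2: "J2 \<le> 0" using A1(1) A3(1) mZ le by linarith
    show "w = Ws a"
    proof (rule extW)
      fix y :: real assume y: "y \<in> {-1..1}"
      consider "y \<le> p" | "p \<le> y" "y \<le> q" | "q \<le> y" by linarith
      then show "w y = Ws a y"
      proof cases
        case 1
        have "integral {-1..y} g = 1*(y - -1)"
          by (rule rigid[OF gi1 p1(1)]) (use Ip e1 1 y J1_def in auto)
        then show ?thesis using wI[OF y] 1 e1 True y by (simp add: Ws_def)
      next
        case 2
        have "integral {p..y} g = 0*(y - p)"
          by (rule rigid[OF gi2 pq]) (use Ipq e2 2 J2_def in auto)
        moreover have "integral {-1..y} g = integral {-1..p} g + integral {p..y} g"
          by (rule comb[OF gi]) (use 2 p1 y in auto)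
        ultimately show ?thesis using wI[OF y] Ip 2 e1 e3 True y by (simp add: Ws_def)
      next
        case 3
        have "integral {q..y} g = 1*(y - q)"
          by (rule rigid[OF gi3 q1(2)]) (use Iq1 e3 3 y J3_def in auto)
        moreover have "integral {-1..y} g = integral {-1..q} g + integral {q..y} g"
          by (rule comb[OF gi]) (use 3 q1 y in auto)
        ultimately show ?thesis using wI[OF y] Iq 3 e3 True y by (simp add: Ws_def)
      qed
    qed
    qed
    ultimately show ?thesis by blast
  next
    case False
    have E: "Eab a = 2*a^2 + 2" using False by (simp add: Eab_def)
    note A1 = amgm2[OF a s1 cs1] and A3 = amgm2[OF a s2 cs3]
    have P: "0 \<le> (a^2 - 1) * (2 - ((p+1) + (1-q)))"
      using False pq by (intro mult_nonneg_nonneg) (auto simp: one_le_power)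
    have Pe: "(a^2 - 1) * (2 - ((p+1) + (1-q))) = (2*a^2 - a^2*(p+1)) + (2*a^2 - a^2*(1-q)) + (p+1) + (1-q) - (2*a^2+2)"
      by (simp add: algebra_simps)
    have G1: "Eab a \<le> Hx w g" unfolding E HX2 using A1(1) A3(1) J2n mZ P Pe by linarith
    moreover have "Hx w g \<le> Eab a \<longrightarrow> w = Ws a"
    proof
    assume "Hx w g \<le> Eab a"
    hence le: "J1 + J2 + J3 + measure lborel {y\<in>{-1..1}. w y \<noteq> 0} \<le> 2*a^2+2" unfolding E HX2 .
    have e1: "p+1 = 1" using A1 A3(1) J2n mZ le P Pe by linarith
    have e3: "1-q = 1" using A3 A1(1) J2n mZ le P Pe by linarith
    have J1e: "J1 \<le> a^2" using A1(1) A3(1) J2n mZ le P Pe e1 e3 by simp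
    have J3e: "J3 \<le> a^2" using A1(1) A3(1) J2n mZ le P Pe e1 e3 by simp
    have p0: "p = 0" "q = 0" using e1 e3 by auto
    show "w = Ws a"
    proof (rule extW)
      fix y :: real assume y: "y \<in> {-1..1}"
      consider "y \<le> 0" | "0 \<le> y" by linarith
      then show "w y = Ws a y"
      proof cases
        case 1
        have "integral {-1..y} g = a*(y - -1)"
          by (rule rigid[OF gi1 p1(1)]) (use Ip J1e 1 y J1_def p0 in auto)
        then show ?thesis using wI[OF y] False y by (simp add: Ws_def algebra_simps)
      next
        case 2
        have "integral {q..y} g = a*(y - q)"
          by (rule rigid[OF gi3 q1(2)]) (use Iq1 J3e 2 y J3_def p0 in auto)
        moreover have "integral {-1..y} g = integral {-1..q} g + integral {q..y} g"
          by (rule comb[OF gi]) (use 2 q1 y p0 in auto)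
        ultimately show ?thesis using wI[OF y] Iq p0 False y by (simp add: Ws_def algebra_simps)
      qed
    qed
    qed
    ultimately show ?thesis by blast
  qed
  then show "Eab a \<le> Hx w g" and "Hx w g \<le> Eab a \<Longrightarrow> w = Ws a" by blast+
qed

definition gs :: "real \<Rightarrow> real \<Rightarrow> real" where
  "gs a y = (if 1 \<le> a then a else if 1-a \<le> \<bar>y\<bar> then 1 else 0)"

lemma Ws_cont: "continuous_on {-1..1} (Ws a)"
proof -
  have "continuous_on {-1..1} (\<lambda>y. if 1 \<le> a then a*y else max 0 (y-(1-a)) + min 0 (y+(1-a)))"
    by (cases "1 \<le> a") (auto intro!: continuous_intros)
  then show ?thesis by (rule continuous_on_eq) (simp add: Ws_def)
qed

lemma Ws_deriv:
  assumes a: "0 < a" and x: "x \<in> {-1<..<1}" "x \<noteq> 1-a" "x \<noteq> -(1-a)"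
  shows "(Ws a has_field_derivative gs a x) (at x)"
proof (cases "1 \<le> a")
  case True
  have "((\<lambda>t. a*t) has_field_derivative a) (at x)" by (auto intro!: derivative_eq_intros)
  then have "(Ws a has_field_derivative a) (at x)"
    by (rule has_field_derivative_transform_within_open[of _ _ _ "{-1<..<1}"]) (use x True in \<open>auto simp: Ws_def\<close>)
  then show ?thesis using True by (simp add: gs_def)
next
  case False
  consider "x > 1-a" | "x < -(1-a)" | "-(1-a) < x" "x < 1-a" using x by linarith
  then show ?thesis
  proof cases
    case 1
    have "((\<lambda>t. t - (1-a)) has_field_derivative 1) (at x)" by (auto intro!: derivative_eq_intros)
    then have "(Ws a has_field_derivative 1) (at x)"
      by (rule has_field_derivative_transform_within_open[of _ _ _ "{1-a<..<1}"]) (use x False 1 in \<open>auto simp: Ws_def\<close>)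
    then show ?thesis using x False 1 by (simp add: gs_def)
  next
    case 2
    have "((\<lambda>t. t + (1-a)) has_field_derivative 1) (at x)" by (auto intro!: derivative_eq_intros)
    then have "(Ws a has_field_derivative 1) (at x)"
      by (rule has_field_derivative_transform_within_open[of _ _ _ "{-1<..< -(1-a)}"]) (use x False 2 in \<open>auto simp: Ws_def\<close>)
    then show ?thesis using x False 2 by (simp add: gs_def)
  next
    case 3
    have "((\<lambda>t. 0) has_field_derivative 0) (at x)" by (auto intro!: derivative_eq_intros)
    then have "(Ws a has_field_derivative 0) (at x)"
      by (rule has_field_derivative_transform_within_open[of _ _ _ "{-(1-a)<..<1-a}"]) (use x False 3 in \<open>auto simp: Ws_def\<close>)
    moreover have "gs a x = 0" using False 3 by (auto simp: gs_def)
    ultimately show ?thesis by simp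
  qed
qed

lemma Ws_FTC:
  assumes a: "0 < a" and y: "y \<in> {-1..1}"
  shows "(gs a has_integral (Ws a y - Ws a (-1))) {-1..y}"
proof (rule fundamental_theorem_of_calculus_interior_strong[of "{1-a, -(1-a)}"])
  show "continuous_on {-1..y} (Ws a)" by (rule continuous_on_subset[OF Ws_cont]) (use y in auto)
  fix x assume "x \<in> {-1<..<y} - {1-a, -(1-a)}"
  then show "(Ws a has_vector_derivative gs a x) (at x)"
    unfolding has_real_derivative_iff_has_vector_derivative[symmetric]
    by (intro Ws_deriv a) (use y in auto)
qed (use y in auto)

lemma gs_meas: "gs a \<in> borel_measurable lborel"
  unfolding gs_def by measurable

lemma gs_set_integrable: "set_integrable lborel {-1..1} (gs a)" "set_integrable lborel {-1..1} (\<lambda>y. (gs a y)^2)"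
proof -
  have m: "gs a \<in> borel_measurable lborel" by (rule gs_meas)
  show "set_integrable lborel {-1..1} (gs a)" unfolding set_integrable_def
    by (rule integrableI_bounded_set[where A="{-1..1}" and B="max 1 \<bar>a\<bar>"]) (use m in \<open>auto simp: gs_def indicator_def\<close>)
  show "set_integrable lborel {-1..1} (\<lambda>y. (gs a y)^2)" unfolding set_integrable_def
    by (rule integrableI_bounded_set[where A="{-1..1}" and B="max 1 (a^2)"]) (use m in \<open>auto simp: gs_def indicator_def\<close>)
qed

lemma Ws_adm: assumes a: "0 < a" shows "admissible a (Ws a) (gs a)"
proof -
  have F: "\<forall>y\<in>{-1..1}. Ws a y = Ws a (-1) + set_lebesgue_integral lborel {-1..y} (gs a)"
  proof
    fix y :: real assume y: "y \<in> {-1..1}"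
    show "Ws a y = Ws a (-1) + set_lebesgue_integral lborel {-1..y} (gs a)"
  proof -
    have "set_integrable lborel {-1..y} (gs a)"
      by (rule set_integrable_subset[OF gs_set_integrable(1)]) (use y in auto)
    from set_borel_integral_eq_integral(2)[OF this] integral_unique[OF Ws_FTC[OF a y]]
    show ?thesis by simp
  qed
  qed
  have E: "Ws a (-1) = -a" "Ws a 1 = a" using a by (auto simp: Ws_def)
  have O: "\<forall>y. y \<notin> {-1..1} \<longrightarrow> Ws a y = 0" by (simp add: Ws_def)
  show ?thesis unfolding admissible_def W12_def using gs_set_integrable F E O by blast
qed

lemma zero_set_meas:
  fixes f :: "real \<Rightarrow> real"
  assumes "continuous_on {-1..1} f"
  shows "{y\<in>{-1..1}. f y \<noteq> 0} \<in> sets lborel"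
proof -
  have c: "closed {y\<in>{-1..1}. f y = 0}" by (rule continuous_closed_preimage_constant[OF assms]) simp
  have "{y\<in>{-1..1}. f y \<noteq> 0} = {-1..1} - {y\<in>{-1..1}. f y = 0}" by auto
  also have "\<dots> \<in> sets lborel" using borel_closed[OF c] by (intro sets.Diff) auto
  finally show ?thesis .
qed

lemma Ws_H: assumes a: "0 < a" shows "Hx (Ws a) (gs a) \<le> Eab a"
proof -
  have Zm: "{y\<in>{-1..1}. Ws a y \<noteq> 0} \<in> sets lborel" by (rule zero_set_meas[OF Ws_cont])
  have L: "set_lebesgue_integral lborel {-1..1} (\<lambda>y. (gs a y)^2) = integral {-1..1} (\<lambda>y. (gs a y)^2)"
    by (rule set_borel_integral_eq_integral(2)[OF gs_set_integrable(2)])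
  show ?thesis
  proof (cases "1 \<le> a")
    case True
    have "integral {-1..1} (\<lambda>y. (gs a y)^2) = 2*a^2" using True by (simp add: gs_def)
    moreover have "measure lborel {y\<in>{-1..1}. Ws a y \<noteq> 0} \<le> measure lborel {-1..1::real}"
      by (rule measure_mono_fmeasurable[OF _ Zm]) (auto simp: fmeasurable_def emeasure_lborel_Icc_eq)
    ultimately show ?thesis using True unfolding Hx_def L by (simp add: Eab_def)
  next
    case False
    have "(\<lambda>y. (gs a y)^2) = gs a" using False by (auto simp: gs_def)
    hence "integral {-1..1} (\<lambda>y. (gs a y)^2) = Ws a 1 - Ws a (-1)"
      using integral_unique[OF Ws_FTC[OF a, of 1]] by simp
    also have "\<dots> = 2*a" using a by (simp add: Ws_def)
    finally have I: "integral {-1..1} (\<lambda>y. (gs a y)^2) = 2*a" .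
    have sub: "{y\<in>{-1..1}. Ws a y \<noteq> 0} \<subseteq> {-1..-(1-a)} \<union> {1-a..1}"
      using False by (auto simp: Ws_def)
    have "measure lborel {y\<in>{-1..1}. Ws a y \<noteq> 0} \<le> measure lborel ({-1..-(1-a)} \<union> {1-a..1})"
      by (rule measure_mono_fmeasurable[OF sub Zm], rule fmeasurableI2[of "{-1..1}"]) (use False a in \<open>auto simp: fmeasurable_def emeasure_lborel_Icc_eq\<close>)
    also have "\<dots> \<le> measure lborel {-1..-(1-a)} + measure lborel {1-a..1}"
      by (rule measure_Un_le) auto
    also have "\<dots> = 2*a" using False a by simp
    finally show ?thesis using False I unfolding Hx_def L by (simp add: Eab_def)
  qed
qed

lemma THE_Ws: assumes a: "0 < a" shows "(THE w. slice_min a w) = Ws a"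
proof (rule the_equality)
  show "slice_min a (Ws a)" unfolding slice_min_def
    using Ws_adm[OF a] Ws_H[OF a] lower(1)[OF a] by (meson order_trans)
next
  fix w assume "slice_min a w"
  then obtain g where adm: "admissible a w g" and mn: "\<And>w' g'. admissible a w' g' \<Longrightarrow> Hx w g \<le> Hx w' g'"
    unfolding slice_min_def by blast
  have "Hx w g \<le> Eab a" using mn[OF Ws_adm[OF a]] Ws_H[OF a] by linarith
  then show "w = Ws a" by (rule lower(2)[OF a adm])
qed


lemma psi_lip:
  fixes a b y :: real
  assumes "a \<le> 1" "b \<le> 1"
  shows "\<bar>(max 0 (y-(1-a)) + min 0 (y+(1-a))) - (max 0 (y-(1-b)) + min 0 (y+(1-b)))\<bar> \<le> \<bar>a - b\<bar>"
  using assms by (cases "0 \<le> y") (auto simp: max_def min_def abs_if)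

lemma Ws_lip:
  assumes "0 < a" "0 < b"
  shows "\<bar>Ws a y - Ws b y\<bar> \<le> \<bar>a - b\<bar>"
proof (cases "y \<in> {-1..1}")
  case False then show ?thesis unfolding Ws_def if_not_P[OF False] by simp
next
  case True
  hence y: "\<bar>y\<bar> \<le> 1" by auto
  define \<psi> where "\<psi> c = max 0 (y-(1-c)) + min 0 (y+(1-c))" for c
  have p1: "\<psi> 1 = y" unfolding \<psi>_def by (auto simp: max_def min_def)
  have pl: "\<bar>\<psi> c - \<psi> d\<bar> \<le> \<bar>c - d\<bar>" if "c \<le> 1" "d \<le> 1" for c d
    unfolding \<psi>_def by (rule psi_lip[OF that])
  have ly: "\<bar>c*y - d*y\<bar> \<le> \<bar>c - d\<bar>" for c d
  proof -
    have "\<bar>c*y - d*y\<bar> = \<bar>c - d\<bar> * \<bar>y\<bar>" by (simp add: abs_mult[symmetric] algebra_simps)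
    also have "\<dots> \<le> \<bar>c - d\<bar> * 1" using y by (intro mult_left_mono) auto
    finally show ?thesis by simp
  qed
  have W: "Ws c y = (if 1 \<le> c then c*y else \<psi> c)" for c using True by (simp add: Ws_def \<psi>_def)
  consider "1 \<le> a" "1 \<le> b" | "a < 1" "b < 1" | "a < 1" "1 \<le> b" | "1 \<le> a" "b < 1" by linarith
  then show ?thesis
  proof cases
    case 1 then show ?thesis unfolding W using ly by simp
  next
    case 2 then show ?thesis unfolding W using pl[of a b] by simp
  next
    case 3
    have "\<bar>\<psi> a - b*y\<bar> \<le> \<bar>\<psi> a - \<psi> 1\<bar> + \<bar>1*y - b*y\<bar>" unfolding p1 by simp
    also have "\<dots> \<le> \<bar>a - 1\<bar> + \<bar>1 - b\<bar>" using pl[of a 1] ly[of 1 b] 3 by simp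
    finally show ?thesis unfolding W using 3 by simp
  next
    case 4
    have "\<bar>a*y - \<psi> b\<bar> \<le> \<bar>a*y - 1*y\<bar> + \<bar>\<psi> 1 - \<psi> b\<bar>" unfolding p1 by simp
    also have "\<dots> \<le> \<bar>a - 1\<bar> + \<bar>1 - b\<bar>" using pl[of 1 b] ly[of a 1] 4 by simp
    finally show ?thesis unfolding W using 4 by simp
  qed
qed

lemma fN_repr:
  assumes "0 < \<alpha>" "\<alpha> < 1" "0 < N"
  shows "fN \<alpha> N x = max (1-\<alpha>) (min 2 (\<bar>x\<bar>*(1+\<alpha>)/N - 2*\<alpha>))"
proof -
  define u where "u = \<bar>x\<bar>"
  have "u*(1+\<alpha>)/N \<le> 1+\<alpha>" if "u \<le> N"
  proof -
    have "u*(1+\<alpha>) \<le> N*(1+\<alpha>)" using that assms by (intro mult_right_mono) auto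
    thus ?thesis using assms by (simp add: field_simps)
  qed
  moreover have "u*(1+\<alpha>)/N > 2+2*\<alpha>" if "u > 2*N"
  proof -
    have "u*(1+\<alpha>) > (2*N)*(1+\<alpha>)" using that assms by (intro mult_strict_right_mono) auto
    thus ?thesis using assms by (simp add: field_simps)
  qed
  moreover have "u*(1+\<alpha>)/N > 1+\<alpha>" if "u > N"
  proof -
    have "u*(1+\<alpha>) > N*(1+\<alpha>)" using that assms by (intro mult_strict_right_mono) auto
    thus ?thesis using assms by (simp add: field_simps)
  qed
  moreover have "u*(1+\<alpha>)/N \<le> 2+2*\<alpha>" if "u \<le> 2*N"
  proof -
    have "u*(1+\<alpha>) \<le> (2*N)*(1+\<alpha>)" using that assms by (intro mult_right_mono) auto
    thus ?thesis using assms by (simp add: field_simps)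
  qed
  ultimately show ?thesis unfolding fN_def u_def[symmetric] using assms by auto
qed

lemma mm_lip:
  fixes U V c d :: real
  shows "\<bar>max c (min 2 (U - d)) - max c (min 2 (V - d))\<bar> \<le> \<bar>U - V\<bar>"
  by (auto simp: max_def min_def abs_if)

lemma fN_lip:
  assumes "0 < \<alpha>" "\<alpha> < 1" "0 < N"
  shows "\<bar>fN \<alpha> N t - fN \<alpha> N x\<bar> \<le> (1+\<alpha>)/N * \<bar>t - x\<bar>"
proof -
  define k where "k = (1+\<alpha>)/N"
  have k: "0 < k" using assms by (simp add: k_def)
  have e: "\<bar>z\<bar>*(1+\<alpha>)/N = \<bar>z\<bar>*k" for z by (simp add: k_def)
  have "\<bar>max (1-\<alpha>) (min 2 (\<bar>t\<bar>*k - 2*\<alpha>)) - max (1-\<alpha>) (min 2 (\<bar>x\<bar>*k - 2*\<alpha>))\<bar> \<le> \<bar>\<bar>t\<bar>*k - \<bar>x\<bar>*k\<bar>"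
    by (rule mm_lip)
  also have "\<dots> = \<bar>k * (\<bar>t\<bar> - \<bar>x\<bar>)\<bar>" by (simp add: algebra_simps)
  also have "\<dots> = k * \<bar>\<bar>t\<bar> - \<bar>x\<bar>\<bar>" using k by (simp add: abs_mult)
  also have "\<dots> \<le> k * \<bar>t - x\<bar>" using k by (intro mult_left_mono) auto
  finally show ?thesis unfolding fN_repr[OF assms] e k_def .
qed

lemma fN_pos: assumes "0 < \<alpha>" "\<alpha> < 1" "0 < N" shows "0 < fN \<alpha> N x"
  using assms unfolding fN_repr[OF assms] by auto

lemma vN_eq: assumes "0 < \<alpha>" "\<alpha> < 1" "0 < N" shows "vN \<alpha> N x y = Ws (fN \<alpha> N x) y"
  unfolding vN_def THE_Ws[OF fN_pos[OF assms]] ..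

lemma deriv_lip:
  fixes f :: "real \<Rightarrow> real"
  assumes "f differentiable (at x)" "\<And>t. \<bar>f t - f x\<bar> \<le> k * \<bar>t - x\<bar>"
  shows "\<bar>deriv f x\<bar> \<le> k"
proof -
  have "(f has_field_derivative deriv f x) (at x)"
    using assms(1) by (simp add: DERIV_deriv_iff_real_differentiable)
  hence "((\<lambda>t. (f t - f x) / (t - x)) \<longlongrightarrow> deriv f x) (at x)"
    by (simp add: has_field_derivative_iff)
  hence "((\<lambda>t. \<bar>(f t - f x) / (t - x)\<bar>) \<longlongrightarrow> \<bar>deriv f x\<bar>) (at x)"
    by (rule tendsto_rabs)
  moreover have "eventually (\<lambda>t. \<bar>(f t - f x) / (t - x)\<bar> \<le> k) (at x)"
    unfolding eventually_at_filter
  proof (intro always_eventually allI impI)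
    fix t :: real assume "t \<noteq> x"
    hence "\<bar>t - x\<bar> > 0" by simp
    thus "\<bar>(f t - f x) / (t - x)\<bar> \<le> k" using assms(2)[of t] by (simp add: abs_divide divide_le_eq)
  qed
  ultimately show ?thesis by (rule tendsto_upperbound) simp
qed


lemma dv_bound:
  assumes "0 < \<alpha>" "\<alpha> < 1" "0 < N"
  shows "\<bar>dvN_dx \<alpha> N x y\<bar> \<le> (1+\<alpha>)/N"
proof (cases "(\<lambda>t. vN \<alpha> N t y) differentiable (at x)")
  case True
  have "\<bar>deriv (\<lambda>t. vN \<alpha> N t y) x\<bar> \<le> (1+\<alpha>)/N"
  proof (rule deriv_lip[OF True])
    fix t
    have "\<bar>vN \<alpha> N t y - vN \<alpha> N x y\<bar> \<le> \<bar>fN \<alpha> N t - fN \<alpha> N x\<bar>"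
      unfolding vN_eq[OF assms] by (rule Ws_lip[OF fN_pos[OF assms] fN_pos[OF assms]])
    also have "\<dots> \<le> (1+\<alpha>)/N * \<bar>t - x\<bar>" by (rule fN_lip[OF assms])
    finally show "\<bar>vN \<alpha> N t y - vN \<alpha> N x y\<bar> \<le> (1+\<alpha>)/N * \<bar>t - x\<bar>" .
  qed
  then show ?thesis using True by (simp add: dvN_dx_def)
next
  case False then show ?thesis using assms by (simp add: dvN_dx_def)
qed

lemma dv_zero:
  assumes "0 < \<alpha>" "\<alpha> < 1" "0 < N" and x: "\<bar>x\<bar> < N \<or> 2*N < \<bar>x\<bar>"
  shows "dvN_dx \<alpha> N x y = 0"
proof -
  obtain S c where S: "open S" "x \<in> S" "\<And>t. t \<in> S \<Longrightarrow> fN \<alpha> N t = c"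
  proof (cases "\<bar>x\<bar> < N")
    case True
    show ?thesis by (rule that[of "{-N<..<N}" "1-\<alpha>"]) (use True in \<open>auto simp: fN_def\<close>)
  next
    case False
    hence "x < -2*N \<or> x > 2*N" using x by linarith
    then show ?thesis
    proof
      assume "x < -2*N"
      show ?thesis by (rule that[of "{..< -2*N}" 2]) (use \<open>x < -2*N\<close> assms in \<open>auto simp: fN_def\<close>)
    next
      assume "x > 2*N"
      show ?thesis by (rule that[of "{2*N<..}" 2]) (use \<open>x > 2*N\<close> assms in \<open>auto simp: fN_def\<close>)
    qed
  qed
  have "((\<lambda>t. Ws c y) has_field_derivative 0) (at x)" by simp
  hence "((\<lambda>t. vN \<alpha> N t y) has_field_derivative 0) (at x)"
    by (rule has_field_derivative_transform_within_open[OF _ S(1,2)]) (simp add: vN_eq[OF assms(1-3)] S(3))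
  hence "deriv (\<lambda>t. vN \<alpha> N t y) x = 0" by (rule DERIV_imp_deriv)
  then show ?thesis by (simp add: dvN_dx_def)
qed

theorem lemma2p2:
  fixes \<alpha> N :: real
  assumes "0 < \<alpha>" and "\<alpha> < 1" and "N > 0"
  shows "(\<integral>\<^sup>+ z \<in> {-3*N..3*N} \<times> {-1..1::real}. ennreal ((dvN_dx \<alpha> N (fst z) (snd z))\<^sup>2) \<partial>lborel)
           \<le> ennreal (16 / N)"
proof -
  have as: "0 < \<alpha>" "\<alpha> < 1" "0 < N" using assms by auto
  define A where "A = {-2*N..-N} \<union> {N..2*N}"
  define S where "S = A \<times> {-1..1::real}"
  define c where "c = 4 / N^2"
  have kb: "(dvN_dx \<alpha> N x y)^2 \<le> c" for x y
  proof -
    have "\<bar>dvN_dx \<alpha> N x y\<bar> \<le> 2/N"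
      using dv_bound[OF as, of x y] as by (smt (verit) divide_right_mono)
    hence "\<bar>dvN_dx \<alpha> N x y\<bar>^2 \<le> (2/N)^2" by (intro power_mono) auto
    thus ?thesis by (simp add: c_def power_divide)
  qed
  have pw: "ennreal ((dvN_dx \<alpha> N (fst z) (snd z))\<^sup>2) * indicator ({-3*N..3*N} \<times> {-1..1::real}) z
            \<le> ennreal c * indicator S z" for z :: "real \<times> real"
  proof (cases "z \<in> {-3*N..3*N} \<times> {-1..1::real}")
    case False then show ?thesis by simp
  next
    case True
    note zR = this
    show ?thesis
    proof (cases "z \<in> S")
      case True then show ?thesis using kb zR by (simp add: ennreal_leI)
    next
      case False
      with True have "\<bar>fst z\<bar> < N \<or> 2*N < \<bar>fst z\<bar>" unfolding S_def A_def by (auto simp: mem_Times_iff)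
      then show ?thesis using dv_zero[OF as] by simp
    qed
  qed
  have Ssets: "S \<in> sets lborel" unfolding S_def A_def
    by (subst lborel_prod[symmetric]) (auto intro: pair_measureI)
  have eA: "emeasure lborel A \<le> ennreal (2*N)"
  proof -
    have "emeasure lborel A \<le> emeasure lborel {-2*N..-N} + emeasure lborel {N..2*N}"
      unfolding A_def by (rule emeasure_subadditive) auto
    also have "\<dots> = ennreal N + ennreal N" using as by simp
    also have "\<dots> = ennreal (2*N)" using as by (simp add: ennreal_plus[symmetric])
    finally show ?thesis .
  qed
  have eS: "emeasure lborel S \<le> ennreal (4*N)"
  proof -
    have "emeasure lborel S = emeasure lborel A * emeasure lborel {-1..1::real}"
      unfolding S_def A_def by (subst lborel_prod[symmetric]) (subst lborel.emeasure_pair_measure_Times; auto)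
    also have "emeasure lborel {-1..1::real} = ennreal 2" by simp
    also have "emeasure lborel A * ennreal 2 \<le> ennreal (2*N) * ennreal 2" by (rule mult_right_mono[OF eA]) simp
    also have "\<dots> = ennreal ((2*N)*2)" using as by (intro ennreal_mult[symmetric]) auto
    also have "\<dots> = ennreal (4*N)" by simp
    finally show ?thesis .
  qed
  have "(\<integral>\<^sup>+ z \<in> {-3*N..3*N} \<times> {-1..1::real}. ennreal ((dvN_dx \<alpha> N (fst z) (snd z))\<^sup>2) \<partial>lborel)
      \<le> (\<integral>\<^sup>+ z. ennreal c * indicator S z \<partial>lborel)"
    by (rule nn_integral_mono) (rule pw)
  also have "\<dots> = ennreal c * emeasure lborel S" by (rule nn_integral_cmult_indicator[OF Ssets])
  also have "\<dots> \<le> ennreal c * ennreal (4*N)" by (intro mult_left_mono eS) auto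
  also have "\<dots> = ennreal (16/N)" using as
    by (simp add: c_def ennreal_mult[symmetric] power2_eq_square field_simps)
  finally show ?thesis .
qed

end
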